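(* Let $p$ be a prime, $\mu\ge1$, $m=p^\mu$, and $n>1$. Let $A=(a_{ij})$ be a random symmetric $n\times n$ matrix over $\mathbf{Z}_m$, conditioned on $a_{11}\not\equiv 0\pmod p$. Then there is an $n\times n$ matrix $U$ (depending on $A$) such that $$UAU^T\equiv\begin{pmatrix} a_{11} & 0\\ 0 & A'\end{pmatrix}\pmod{p^\mu},$$ where the $1\times(n-1)$ and $(n-1)\times1$ off-diagonal blocks are zero and $A'$ is a random symmetric $(n-1)\times(n-1)$ matrix over $\mathbf{Z}_m$ (i.e. under the stated conditional distribution of $A$, $A'$ reduced mod $m$ is uniformly distributed over symmetric $(n-1)\times(n-1)$ matrices over $\mathbf{Z}_m$).
   Context: For a positive integer $m$, $\mathbf{Z}_m=\{1,2,\ldots,m\}$ (viewed as residues mod $m$). A random symmetric $n\times n$ matrix over $\mathbf{Z}_m$ is one whose entries $a_{ij}$, $i\le j$, are chosen independently and uniformly from $\mathbf{Z}_m$, with $a_{ji}=a_{ij}$. *)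

theory Defs
  imports "HOL-Probability.Probability_Mass_Function" "HOL-Number_Theory.Cong"
begin

text \<open>Square matrices of size n are represented as functions nat => nat => int,
  indexed by 0..n-1 (index 0 plays the role of the paper's index 1),
  and required to be 0 outside the index range so that sets of matrices are finite.\<close>

definition mat_prod :: "nat \<Rightarrow> (nat \<Rightarrow> nat \<Rightarrow> int) \<Rightarrow> (nat \<Rightarrow> nat \<Rightarrow> int) \<Rightarrow> (nat \<Rightarrow> nat \<Rightarrow> int)" where
  "mat_prod n X Y = (\<lambda>i j. if i < n \<and> j < n then (\<Sum>k<n. X i k * Y k j) else 0)"

definition mat_transpose :: "(nat \<Rightarrow> nat \<Rightarrow> int) \<Rightarrow> (nat \<Rightarrow> nat \<Rightarrow> int)" where
  "mat_transpose X = (\<lambda>i j. X j i)"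

text \<open>Z_m = {1,...,m}: the canonical representative of an integer in Z_m.\<close>
definition red :: "int \<Rightarrow> int \<Rightarrow> int" where
  "red m x = (x - 1) mod m + 1"

definition sym_mats :: "nat \<Rightarrow> int \<Rightarrow> (nat \<Rightarrow> nat \<Rightarrow> int) set" where
  "sym_mats n m = {A. (\<forall>i j. i < n \<and> j < n \<longrightarrow> A i j \<in> {1..m} \<and> A i j = A j i)
                    \<and> (\<forall>i j. \<not> (i < n \<and> j < n) \<longrightarrow> A i j = 0)}"

definition random_sym :: "nat \<Rightarrow> int \<Rightarrow> (nat \<Rightarrow> nat \<Rightarrow> int) pmf" where
  "random_sym n m = pmf_of_set (sym_mats n m)"

definition random_sym_cond :: "nat \<Rightarrow> int \<Rightarrow> int \<Rightarrow> (nat \<Rightarrow> nat \<Rightarrow> int) pmf" where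
  "random_sym_cond n m p = pmf_of_set {A \<in> sym_mats n m. \<not> p dvd A 0 0}"

definition lower_block_red :: "nat \<Rightarrow> int \<Rightarrow> (nat \<Rightarrow> nat \<Rightarrow> int) \<Rightarrow> (nat \<Rightarrow> nat \<Rightarrow> int)" where
  "lower_block_red n m B = (\<lambda>i j. if i < n - 1 \<and> j < n - 1 then red m (B (Suc i) (Suc j)) else 0)"

end

theory Submission imports Defs begin

definition Uf :: "(nat \<Rightarrow> nat \<Rightarrow> int) \<Rightarrow> nat \<Rightarrow> nat \<Rightarrow> int" where
  "Uf A i j = (if i = 0 then (if j = 0 then 1 else 0) else if j = i then A 0 0 else if j = 0 then - A 0 i else 0)"

lemma mat_prod_eq: "i < n \<Longrightarrow> j < n \<Longrightarrow> mat_prod n X Y i j = (\<Sum>k<n. X i k * Y k j)"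
  by (simp add: mat_prod_def)

lemma sum2L:
  fixes f :: "nat \<Rightarrow> int"
  assumes "i \<noteq> 0" "i < n"
  shows "(\<Sum>k<n. (if k = i then a else if k = 0 then b else 0) * f k) = a * f i + b * f (0::nat)"
proof -
  have "(\<Sum>k<n. (if k = i then a else if k = 0 then b else 0) * f k)
     = (\<Sum>k<n. (if k = i then a * f k else 0) + (if k = 0 then b * f k else 0))"
    by (rule sum.cong) (use assms in auto)
  also have "\<dots> = a * f i + b * f 0" using assms by (simp add: sum.distrib)
  finally show ?thesis .
qed

lemma sum2R:
  fixes f :: "nat \<Rightarrow> int"
  assumes "i \<noteq> 0" "i < n"
  shows "(\<Sum>k<n. f k * (if k = i then a else if k = 0 then b else 0)) = f i * a + f (0::nat) * b"
  using sum2L[OF assms, of a b f] by (simp add: mult.commute)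

lemma P_formula:
  assumes "i < n" "k < n"
  shows "mat_prod n (Uf A) A i k = (if i = 0 then A 0 k else A 0 0 * A i k - A 0 i * A 0 k)"
proof (cases "i = 0")
  case True
  have "(\<Sum>k'<n. Uf A i k' * A k' k) = (\<Sum>k'<n. (if k' = 0 then A k' k else 0))"
    by (rule sum.cong) (auto simp: Uf_def True)
  then show ?thesis using assms True by (simp add: mat_prod_eq)
next
  case False
  have "(\<Sum>k'<n. Uf A i k' * A k' k) = (\<Sum>k'<n. (if k' = i then A 0 0 else if k' = 0 then - A 0 i else 0) * A k' k)"
    by (rule sum.cong) (auto simp: Uf_def False)
  also have "\<dots> = A 0 0 * A i k + (- A 0 i) * A 0 k" by (rule sum2L[OF False assms(1)])
  finally show ?thesis using assms False by (simp add: mat_prod_eq)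
qed

lemma M_formula:
  assumes "i < n" "j < n" and sym: "\<forall>i j. i < n \<and> j < n \<longrightarrow> A i j = A j i"
  shows "mat_prod n (mat_prod n (Uf A) A) (mat_transpose (Uf A)) i j =
    (if i = 0 then (if j = 0 then A 0 0 else 0) else if j = 0 then 0
     else A 0 0 ^ 2 * A i j - A 0 0 * A 0 i * A 0 j)"
proof -
  let ?P = "mat_prod n (Uf A) A"
  have n0: "0 < n" using assms by auto
  have M: "mat_prod n ?P (mat_transpose (Uf A)) i j = (\<Sum>k<n. ?P i k * Uf A j k)"
    using assms by (simp add: mat_prod_eq mat_transpose_def)
  show ?thesis
  proof (cases "j = 0")
    case True
    have "(\<Sum>k<n. ?P i k * Uf A j k) = (\<Sum>k<n. (if k = 0 then ?P i k else 0))"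
      by (rule sum.cong) (auto simp: Uf_def True)
    also have "\<dots> = ?P i 0" using n0 by simp
    finally show ?thesis using M True P_formula[OF assms(1) n0, of A] sym assms
      by auto
  next
    case False
    have "(\<Sum>k<n. ?P i k * Uf A j k) = (\<Sum>k<n. ?P i k * (if k = j then A 0 0 else if k = 0 then - A 0 j else 0))"
      by (rule sum.cong) (auto simp: Uf_def False)
    also have "\<dots> = ?P i j * A 0 0 + ?P i 0 * (- A 0 j)" by (rule sum2R[OF False assms(2)])
    finally have "mat_prod n ?P (mat_transpose (Uf A)) i j = ?P i j * A 0 0 + ?P i 0 * (- A 0 j)"
      using M by simp
    moreover have "A i 0 = A 0 i" using sym assms n0 by auto
    ultimately show ?thesis using False P_formula[OF assms(1) n0, of A] P_formula[OF assms(1,2), of A]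
      by (auto simp: algebra_simps power2_eq_square)
  qed
qed

lemma red_range: "0 < m \<Longrightarrow> red m x \<in> {1..m}"
proof -
  assume m: "0 < m"
  have "0 \<le> (x - 1) mod m" "(x - 1) mod m < m" using m by simp_all
  thus ?thesis by (simp add: red_def)
qed

lemma red_cong: "0 < m \<Longrightarrow> [red m x = x] (mod m)"
  unfolding red_def cong_def by (simp add: mod_add_left_eq)

lemma red_eq: "0 < m \<Longrightarrow> y \<in> {1..m} \<Longrightarrow> [x = y] (mod m) \<Longrightarrow> red m x = y"
proof -
  assume m: "0 < m" and y: "y \<in> {1..m}" and c: "[x = y] (mod m)"
  have "[x - 1 = y - 1] (mod m)" using c by (rule cong_diff) (rule cong_refl)
  hence "(x - 1) mod m = (y - 1) mod m" by (simp add: cong_def)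
  also have "\<dots> = y - 1" using y by (simp add: mod_pos_pos_trivial)
  finally show ?thesis by (simp add: red_def)
qed

lemma inv1:
  fixes m u w X t :: int
  assumes m: "0 < m" and uw: "[u * w = 1] (mod m)" and X: "X \<in> {1..m}"
  shows "red m (w * (red m (u * X - t) + t)) = X"
proof (rule red_eq[OF m X])
  have "[red m (u * X - t) + t = (u * X - t) + t] (mod m)"
    by (rule cong_add[OF red_cong[OF m] cong_refl])
  hence "[w * (red m (u * X - t) + t) = w * ((u * X - t) + t)] (mod m)"
    by (rule cong_mult[OF cong_refl])
  moreover have "w * ((u * X - t) + t) = (u * w) * X" by (simp add: algebra_simps)
  moreover have "[(u * w) * X = 1 * X] (mod m)" by (rule cong_mult[OF uw cong_refl])
  ultimately show "[w * (red m (u * X - t) + t) = X] (mod m)"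
    by (metis cong_trans mult_1)
qed

lemma inv2:
  fixes m u w B t :: int
  assumes m: "0 < m" and uw: "[u * w = 1] (mod m)" and B: "B \<in> {1..m}"
  shows "red m (u * red m (w * (B + t)) - t) = B"
proof (rule red_eq[OF m B])
  have "[u * red m (w * (B + t)) = u * (w * (B + t))] (mod m)"
    by (rule cong_mult[OF cong_refl red_cong[OF m]])
  hence "[u * red m (w * (B + t)) - t = u * (w * (B + t)) - t] (mod m)"
    by (rule cong_diff[OF _ cong_refl])
  moreover have "u * (w * (B + t)) - t = (u * w) * (B + t) - t" by (simp add: algebra_simps)
  moreover have "[(u * w) * (B + t) - t = 1 * (B + t) - t] (mod m)"
    by (rule cong_diff[OF cong_mult[OF uw cong_refl] cong_refl])
  ultimately show "[u * red m (w * (B + t)) - t = B] (mod m)"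
    by (metis cong_trans add_diff_cancel_right' mult_1)
qed

lemma finite_bounded_funs:
  assumes "finite X"
  shows "finite {f :: nat \<Rightarrow> 'a. \<forall>j. (j < n \<longrightarrow> f j \<in> X) \<and> (n \<le> j \<longrightarrow> f j = c)}"
proof (rule inj_on_finite[where f = "\<lambda>f. restrict f {..<n}" and B = "PiE {..<n} (\<lambda>_. X)"])
  show "inj_on (\<lambda>f. restrict f {..<n}) {f. \<forall>j. (j < n \<longrightarrow> f j \<in> X) \<and> (n \<le> j \<longrightarrow> f j = c)}"
  proof (rule inj_onI, rule ext)
    fix f g j
    assume f: "f \<in> {f. \<forall>j. (j < n \<longrightarrow> f j \<in> X) \<and> (n \<le> j \<longrightarrow> f j = c)}"
      and g: "g \<in> {f. \<forall>j. (j < n \<longrightarrow> f j \<in> X) \<and> (n \<le> j \<longrightarrow> f j = c)}"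
      and e: "restrict f {..<n} = restrict g {..<n}"
    show "f j = g j"
    proof (cases "j < n")
      case True then show ?thesis using fun_cong[OF e, of j] by simp
    next
      case False then show ?thesis using f g by auto
    qed
  qed
  show "(\<lambda>f. restrict f {..<n}) ` {f. \<forall>j. (j < n \<longrightarrow> f j \<in> X) \<and> (n \<le> j \<longrightarrow> f j = c)} \<subseteq> PiE {..<n} (\<lambda>_. X)"
    by (rule image_subsetI, subst restrict_PiE_iff) auto
  show "finite (PiE {..<n} (\<lambda>_. X))" using assms by (simp add: finite_PiE)
qed

lemma finite_sym_mats: "finite (sym_mats n m)"
proof -
  define W where "W = {f :: nat \<Rightarrow> int. \<forall>j. (j < n \<longrightarrow> f j \<in> {1..m}) \<and> (n \<le> j \<longrightarrow> f j = 0)}"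
  have fW: "finite W" unfolding W_def by (rule finite_bounded_funs) simp
  have "finite {A :: nat \<Rightarrow> nat \<Rightarrow> int. \<forall>i. (i < n \<longrightarrow> A i \<in> W) \<and> (n \<le> i \<longrightarrow> A i = (\<lambda>_. 0))}"
    by (rule finite_bounded_funs[OF fW])
  moreover have "sym_mats n m \<subseteq> {A :: nat \<Rightarrow> nat \<Rightarrow> int. \<forall>i. (i < n \<longrightarrow> A i \<in> W) \<and> (n \<le> i \<longrightarrow> A i = (\<lambda>_. 0))}"
    by (auto simp: sym_mats_def W_def)
  ultimately show ?thesis by (rule finite_subset[rotated])
qed

lemma pmf_of_set_times:
  assumes "finite R" "R \<noteq> {}" "finite T" "T \<noteq> {}"
  shows "pmf_of_set (R \<times> T) = pair_pmf (pmf_of_set R) (pmf_of_set T)"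
proof (rule pmf_eqI)
  fix x :: "'a \<times> 'b"
  obtain a b where x: "x = (a, b)" by (cases x)
  show "pmf (pmf_of_set (R \<times> T)) x = pmf (pair_pmf (pmf_of_set R) (pmf_of_set T)) x"
    using assms by (simp add: x pmf_pair card_cartesian_product split: split_indicator)
qed


theorem lemma2p1:
  fixes p :: int and \<mu> n :: nat
  assumes "prime p" and "\<mu> \<ge> 1" and "n > 1"
  defines "m \<equiv> p ^ \<mu>"
  shows "\<exists>U :: (nat \<Rightarrow> nat \<Rightarrow> int) \<Rightarrow> (nat \<Rightarrow> nat \<Rightarrow> int).
           (\<forall>A \<in> set_pmf (random_sym_cond n m p).
              [mat_prod n (mat_prod n (U A) A) (mat_transpose (U A)) 0 0 = A 0 0] (mod m) \<and>
              (\<forall>j. 0 < j \<and> j < n \<longrightarrow>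
                 [mat_prod n (mat_prod n (U A) A) (mat_transpose (U A)) 0 j = 0] (mod m) \<and>
                 [mat_prod n (mat_prod n (U A) A) (mat_transpose (U A)) j 0 = 0] (mod m)))
         \<and> map_pmf (\<lambda>A. lower_block_red n m (mat_prod n (mat_prod n (U A) A) (mat_transpose (U A))))
             (random_sym_cond n m p) = random_sym (n - 1) m"
proof -
  have p2: "p \<ge> 2" using assms(1) by (simp add: prime_ge_2_int)
  have mp: "p \<le> m" unfolding m_def using p2 assms(2) self_le_power[of p \<mu>] by simp
  hence m0: "0 < m" using p2 by linarith
  have n0: "0 < n" using assms(3) by simp
  have cop: "coprime (a^2) m" if "\<not> p dvd a" for a
  proof -
    have "coprime p a" using assms(1) that by (simp add: prime_imp_coprime)
    hence "coprime a p" by (simp add: coprime_commute)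
    thus ?thesis unfolding m_def using assms(2) by simp
  qed
  define v where "v a = (SOME w. [a^2 * w = 1] (mod m))" for a
  have vinv: "[a^2 * v a = 1] (mod m)" if "\<not> p dvd a" for a
  proof -
    have "\<exists>w. [a^2 * w = 1] (mod m)" using cong_solve_coprime_int[OF cop[OF that]] .
    thus ?thesis unfolding v_def by (rule someI_ex)
  qed
  define S where "S = {A \<in> sym_mats n m. \<not> p dvd A 0 0}"
  define R where "R = {r :: nat \<Rightarrow> int. (\<forall>j. (j < n \<longrightarrow> r j \<in> {1..m}) \<and> (n \<le> j \<longrightarrow> r j = 0)) \<and> \<not> p dvd r 0}"
  define T where "T = sym_mats (n - 1) m"
  define F where "F A = (\<lambda>i j. if i < n - 1 \<and> j < n - 1 then
      red m (A 0 0 ^ 2 * A (Suc i) (Suc j) - A 0 0 * A 0 (Suc i) * A 0 (Suc j)) else 0)"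
    for A :: "nat \<Rightarrow> nat \<Rightarrow> int"
  define G where "G A = ((\<lambda>j. A 0 j), F A)" for A :: "nat \<Rightarrow> nat \<Rightarrow> int"
  define H where "H rB = (\<lambda>i j. if i < n \<and> j < n then
      (if i = 0 then fst rB j else if j = 0 then fst rB i
       else red m (v (fst rB 0) * (snd rB (i - 1) (j - 1) + fst rB 0 * fst rB i * fst rB j))) else 0)"
    for rB :: "(nat \<Rightarrow> int) \<times> (nat \<Rightarrow> nat \<Rightarrow> int)"
  have rc: "random_sym_cond n m p = pmf_of_set S" by (simp add: random_sym_cond_def S_def)
  have rs: "random_sym (n - 1) m = pmf_of_set T" by (simp add: random_sym_def T_def)
  have fS: "finite S" unfolding S_def using finite_sym_mats by (rule finite_subset[rotated]) auto
  have neS: "S \<noteq> {}"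
  proof -
    have "(\<lambda>i j. if i < n \<and> j < n then 1 else 0) \<in> S"
      using m0 n0 mp p2 assms(1) by (auto simp: S_def sym_mats_def)
    thus ?thesis by auto
  qed
  have symS: "\<forall>i j. i < n \<and> j < n \<longrightarrow> A i j = A j i" if "A \<in> S" for A
    using that by (auto simp: S_def sym_mats_def)
  have G_in: "G A \<in> R \<times> T" if A: "A \<in> S" for A
  proof -
    have "(\<lambda>j. A 0 j) \<in> R" using A n0 by (auto simp: S_def sym_mats_def R_def)
    moreover have "F A \<in> T" unfolding T_def sym_mats_def
    proof (intro CollectI conjI allI impI)
      fix i j assume ij: "i < n - 1 \<and> j < n - 1"
      show "F A i j \<in> {1..m}" using ij by (simp add: F_def red_range[OF m0, simplified])
      have "A (Suc i) (Suc j) = A (Suc j) (Suc i)" using symS[OF A] ij by (simp add: Suc_less_eq2 less_diff_conv)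
      then show "F A i j = F A j i" using ij by (simp add: F_def ac_simps)
    next
      fix i j assume "\<not> (i < n - 1 \<and> j < n - 1)"
      then show "F A i j = 0" unfolding F_def by auto
    qed
    ultimately show ?thesis by (simp add: G_def)
  qed
  have H_in: "H rB \<in> S" if rB: "rB \<in> R \<times> T" for rB
  proof -
    obtain r B where e: "rB = (r, B)" by (cases rB)
    have r: "r \<in> R" and B: "B \<in> T" using rB e by auto
    have rr: "\<And>j. j < n \<Longrightarrow> r j \<in> {1..m}" and pr: "\<not> p dvd r 0" using r by (auto simp: R_def)
    have Bs: "\<And>i j. i < n - 1 \<Longrightarrow> j < n - 1 \<Longrightarrow> B i j = B j i" using B by (auto simp: T_def sym_mats_def)
    show ?thesis unfolding S_def sym_mats_def
    proof (intro CollectI conjI allI impI)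
      fix i j assume ij: "i < n \<and> j < n"
      show "H rB i j \<in> {1..m}"
        using ij rr by (simp add: H_def e red_range[OF m0, simplified])
      show "H rB i j = H rB j i"
      proof (cases "i = 0 \<or> j = 0")
        case True then show ?thesis using ij by (auto simp: H_def e)
      next
        case False
        hence "B (i - 1) (j - 1) = B (j - 1) (i - 1)" using ij by (intro Bs) auto
        then show ?thesis using ij False by (simp add: H_def e ac_simps)
      qed
    next
      fix i j assume "\<not> (i < n \<and> j < n)"
      then show "H rB i j = 0" unfolding H_def by auto
    next
      show "\<not> p dvd H rB 0 0" using pr n0 by (simp add: H_def e)
    qed
  qed
  have HG: "H (G A) = A" if A: "A \<in> S" for A
  proof (rule ext, rule ext)
    fix i j
    have pA: "\<not> p dvd A 0 0" using A by (simp add: S_def)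
    show "H (G A) i j = A i j"
    proof (cases "i < n \<and> j < n")
      case False then show ?thesis using A by (auto simp: H_def S_def sym_mats_def)
    next
      case True
      show ?thesis
      proof (cases "i = 0 \<or> j = 0")
        case True then show ?thesis using \<open>i < n \<and> j < n\<close> symS[OF A] by (auto simp: H_def G_def)
      next
        case False
        have X: "A i j \<in> {1..m}" using A \<open>i < n \<and> j < n\<close> by (auto simp: S_def sym_mats_def)
        have "H (G A) i j = red m (v (A 0 0) * (red m (A 0 0 ^ 2 * A i j - A 0 0 * A 0 i * A 0 j) + A 0 0 * A 0 i * A 0 j))"
          using False \<open>i < n \<and> j < n\<close> by (auto simp: H_def G_def F_def)
        also have "\<dots> = A i j" by (rule inv1[OF m0 vinv[OF pA] X])
        finally show ?thesis .
      qed
    qed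
  qed
  have GH: "G (H rB) = rB" if rB: "rB \<in> R \<times> T" for rB
  proof -
    obtain r B where e: "rB = (r, B)" by (cases rB)
    have r: "r \<in> R" and B: "B \<in> T" using rB e by auto
    have pr: "\<not> p dvd r 0" using r by (simp add: R_def)
    have 1: "(\<lambda>j. H rB 0 j) = r" using r n0 by (auto simp: H_def e R_def)
    have 2: "F (H rB) = B"
    proof (rule ext, rule ext)
      fix i j
      show "F (H rB) i j = B i j"
      proof (cases "i < n - 1 \<and> j < n - 1")
        case False then show ?thesis using B by (auto simp: F_def T_def sym_mats_def)
      next
        case True
        have Bij: "B i j \<in> {1..m}" using B True by (auto simp: T_def sym_mats_def)
        have "F (H rB) i j = red m (r 0 ^ 2 * red m (v (r 0) * (B i j + r 0 * r (Suc i) * r (Suc j))) - r 0 * r (Suc i) * r (Suc j))"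
          using True n0 by (auto simp: F_def H_def e)
        also have "\<dots> = B i j" by (rule inv2[OF m0 vinv[OF pr] Bij])
        finally show ?thesis .
      qed
    qed
    show ?thesis using 1 2 by (simp add: G_def e)
  qed
  have bij: "bij_betw G S (R \<times> T)"
    apply (rule bij_betw_byWitness[where f' = H])
    using HG apply blast
    using GH apply blast
    using G_in apply blast
    using H_in apply blast
    done
  have img: "G ` S = R \<times> T" using bij by (simp add: bij_betw_def)
  have fRT: "finite (R \<times> T)" using fS img by (metis finite_imageI)
  have neRT: "R \<times> T \<noteq> {}" using neS img by auto
  have neR: "R \<noteq> {}" and neT: "T \<noteq> {}" using neRT by auto
  have fR: "finite R" by (rule finite_cartesian_productD1[OF fRT neT])
  have fT: "finite T" by (rule finite_cartesian_productD2[OF fRT neR])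
  have lowF: "lower_block_red n m (mat_prod n (mat_prod n (Uf A) A) (mat_transpose (Uf A))) = F A"
    if A: "A \<in> S" for A
  proof (rule ext, rule ext)
    fix i j
    show "lower_block_red n m (mat_prod n (mat_prod n (Uf A) A) (mat_transpose (Uf A))) i j = F A i j"
    proof (cases "i < n - 1 \<and> j < n - 1")
      case False then show ?thesis unfolding lower_block_red_def F_def by auto
    next
      case True
      hence "Suc i < n" "Suc j < n" by auto
      then show ?thesis using True M_formula[OF \<open>Suc i < n\<close> \<open>Suc j < n\<close> symS[OF A]]
        by (simp add: lower_block_red_def F_def)
    qed
  qed
  have "map_pmf (\<lambda>A. lower_block_red n m (mat_prod n (mat_prod n (Uf A) A) (mat_transpose (Uf A))))
          (pmf_of_set S) = map_pmf F (pmf_of_set S)"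
    by (rule map_pmf_cong) (use fS neS lowF in auto)
  also have "\<dots> = map_pmf snd (map_pmf G (pmf_of_set S))"
    by (simp add: map_pmf_comp G_def)
  also have "\<dots> = map_pmf snd (pmf_of_set (R \<times> T))"
    using map_pmf_of_set_bij_betw[OF bij neS fS] by simp
  also have "\<dots> = pmf_of_set T"
    using pmf_of_set_times[OF fR neR fT neT] by (simp add: map_snd_pair_pmf)
  finally have dist: "map_pmf (\<lambda>A. lower_block_red n m (mat_prod n (mat_prod n (Uf A) A) (mat_transpose (Uf A))))
          (pmf_of_set S) = pmf_of_set T" .
  have part1: "\<forall>A \<in> set_pmf (random_sym_cond n m p).
              [mat_prod n (mat_prod n (Uf A) A) (mat_transpose (Uf A)) 0 0 = A 0 0] (mod m) \<and>
              (\<forall>j. 0 < j \<and> j < n \<longrightarrow>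
                 [mat_prod n (mat_prod n (Uf A) A) (mat_transpose (Uf A)) 0 j = 0] (mod m) \<and>
                 [mat_prod n (mat_prod n (Uf A) A) (mat_transpose (Uf A)) j 0 = 0] (mod m))"
  proof
    fix A assume "A \<in> set_pmf (random_sym_cond n m p)"
    hence A: "A \<in> S" using rc fS neS by simp
    show "[mat_prod n (mat_prod n (Uf A) A) (mat_transpose (Uf A)) 0 0 = A 0 0] (mod m) \<and>
              (\<forall>j. 0 < j \<and> j < n \<longrightarrow>
                 [mat_prod n (mat_prod n (Uf A) A) (mat_transpose (Uf A)) 0 j = 0] (mod m) \<and>
                 [mat_prod n (mat_prod n (Uf A) A) (mat_transpose (Uf A)) j 0 = 0] (mod m))"
    proof (intro conjI allI impI)
      show "[mat_prod n (mat_prod n (Uf A) A) (mat_transpose (Uf A)) 0 0 = A 0 0] (mod m)"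
        using M_formula[OF n0 n0 symS[OF A]] by simp
    next
      fix j assume j: "0 < j \<and> j < n"
      have "mat_prod n (mat_prod n (Uf A) A) (mat_transpose (Uf A)) 0 j = 0"
        using M_formula[OF n0 _ symS[OF A], of j] j by simp
      then show "[mat_prod n (mat_prod n (Uf A) A) (mat_transpose (Uf A)) 0 j = 0] (mod m)" by simp
      have "mat_prod n (mat_prod n (Uf A) A) (mat_transpose (Uf A)) j 0 = 0"
        using M_formula[OF _ n0 symS[OF A], of j] j by simp
      then show "[mat_prod n (mat_prod n (Uf A) A) (mat_transpose (Uf A)) j 0 = 0] (mod m)" by simp
    qed
  qed
  have dist': "map_pmf (\<lambda>A. lower_block_red n m (mat_prod n (mat_prod n (Uf A) A) (mat_transpose (Uf A))))
          (random_sym_cond n m p) = random_sym (n - 1) m"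
    unfolding rc rs by (rule dist)
  show ?thesis
    by (rule exI[of _ Uf], rule conjI[OF part1 dist'])
qed

end
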